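(* Let $n\ge 6$ be even and let $P(n)$ be the number of Latin rows $(s_1,\dots,s_n)$ of length $n$ with $s_1=1$ and inner distance $\frac n2-1$ (equivalently, Hamiltonian paths starting at vertex $1$ in the maximum distance graph). Then $P(n)=\frac14n^2+2$ if $n\equiv 0\pmod 4$, and $P(n)=\frac14 n^2+1$ if $n\equiv 2\pmod 4$.
   Context: For $a,b\in[1,n]$, $\mathrm{dist}(a,b)$ is the minimum of the residues of $a-b$ and $b-a$ modulo $n$ (in $[0,n-1]$). A Latin row of length $n$ is a permutation $(s_1,\dots,s_n)$ of $[1,n]$; its inner distance is $\min_{1\le j\le n-1}\mathrm{dist}(s_j,s_{j+1})$. The maximum distance graph has vertex set $[1,n]$ and an edge between $x\ne y$ whenever $\mathrm{dist}(x,y)\ge\lfloor\frac{n-1}2\rfloor$. *)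

theory Defs
  imports Main
begin

definition cdist :: "nat \<Rightarrow> nat \<Rightarrow> nat \<Rightarrow> nat" where
  "cdist n a b = nat (min ((int a - int b) mod int n) ((int b - int a) mod int n))"

definition latin_row :: "nat \<Rightarrow> nat list \<Rightarrow> bool" where
  "latin_row n s \<longleftrightarrow> length s = n \<and> distinct s \<and> set s = {1..n}"

definition inner_distance :: "nat \<Rightarrow> nat list \<Rightarrow> nat" where
  "inner_distance n s = Min {cdist n (s ! j) (s ! (j+1)) | j. j + 1 < length s}"

definition P :: "nat \<Rightarrow> nat" where
  "P n = card {s. latin_row n s \<and> s ! 0 = 1 \<and> inner_distance n s = n div 2 - 1}"

end

theory Submission
  imports Defs
begin


fun chn :: "('a \<Rightarrow> 'a \<Rightarrow> bool) \<Rightarrow> 'a \<Rightarrow> 'a list \<Rightarrow> bool" where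
  "chn E v [] = True"
| "chn E v (w # ws) = (E v w \<and> chn E w ws)"

definition paths :: "('a \<Rightarrow> 'a \<Rightarrow> bool) \<Rightarrow> 'a \<Rightarrow> 'a set \<Rightarrow> 'a list set" where
  "paths E v U = {ws. distinct ws \<and> set ws = U \<and> chn E v ws}"

definition cnt :: "('a \<Rightarrow> 'a \<Rightarrow> bool) \<Rightarrow> 'a \<Rightarrow> 'a set \<Rightarrow> nat" where
  "cnt E v U = card (paths E v U)"

lemma finite_paths: "finite U \<Longrightarrow> finite (paths E v U)"
proof -
  assume f: "finite U"
  have "paths E v U \<subseteq> {ws. set ws \<subseteq> U \<and> length ws = card U}"
  proof
    fix ws assume "ws \<in> paths E v U"
    then have "distinct ws" "set ws = U" unfolding paths_def by auto
    then show "ws \<in> {ws. set ws \<subseteq> U \<and> length ws = card U}" using distinct_card[of ws] by simp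
  qed
  moreover have "finite {ws. set ws \<subseteq> U \<and> length ws = card U}"
    using finite_lists_length_eq[OF f] by blast
  ultimately show ?thesis by (rule finite_subset)
qed

lemma paths_empty: "paths E v {} = {[]}"
  unfolding paths_def by auto

lemma cnt_empty: "cnt E v {} = 1"
  unfolding cnt_def paths_empty by simp

lemma paths_rec:
  assumes "U \<noteq> {}"
  shows "paths E v U = (\<Union>w\<in>{w\<in>U. E v w}. Cons w ` paths E w (U - {w}))"
proof
  show "paths E v U \<subseteq> (\<Union>w\<in>{w\<in>U. E v w}. Cons w ` paths E w (U - {w}))"
  proof
    fix ws assume "ws \<in> paths E v U"
    then have d: "distinct ws" "set ws = U" "chn E v ws" unfolding paths_def by auto
    then obtain w ws' where ws: "ws = w # ws'" using assms by (cases ws) auto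
    then have "distinct ws'" "w \<notin> set ws'" "set ws' = U - {w}" "chn E w ws'" using d by auto
    then have "ws' \<in> paths E w (U - {w})" unfolding paths_def by simp
    moreover have "w \<in> {w\<in>U. E v w}" using d ws by auto
    ultimately show "ws \<in> (\<Union>w\<in>{w\<in>U. E v w}. Cons w ` paths E w (U - {w}))"
      using ws by blast
  qed
next
  show "(\<Union>w\<in>{w\<in>U. E v w}. Cons w ` paths E w (U - {w})) \<subseteq> paths E v U"
  proof
    fix ws assume "ws \<in> (\<Union>w\<in>{w\<in>U. E v w}. Cons w ` paths E w (U - {w}))"
    then obtain w ws' where a: "w \<in> U" "E v w" "ws' \<in> paths E w (U - {w})" "ws = w # ws'" by blast
    then have "distinct ws'" "set ws' = U - {w}" "chn E w ws'" unfolding paths_def by auto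
    then show "ws \<in> paths E v U" unfolding paths_def using a by auto
  qed
qed

lemma cnt_rec:
  assumes "finite U" "U \<noteq> {}"
  shows "cnt E v U = (\<Sum>w\<in>{w\<in>U. E v w}. cnt E w (U - {w}))"
proof -
  have "cnt E v U = card (\<Union>w\<in>{w\<in>U. E v w}. Cons w ` paths E w (U - {w}))"
    unfolding cnt_def paths_rec[OF assms(2)] ..
  also have "\<dots> = (\<Sum>w\<in>{w\<in>U. E v w}. card (Cons w ` paths E w (U - {w})))"
    by (rule card_UN_disjoint) (use assms(1) in \<open>auto intro!: finite_imageI finite_paths\<close>)
  also have "\<dots> = (\<Sum>w\<in>{w\<in>U. E v w}. cnt E w (U - {w}))"
    unfolding cnt_def by (intro sum.cong refl card_image) (auto intro: inj_onI)
  finally show ?thesis .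
qed

lemma chn_nth: "chn E v ws \<longleftrightarrow> (\<forall>i<length ws. E ((v#ws)!i) (ws!i))"
proof (induction ws arbitrary: v)
  case Nil then show ?case by simp
next
  case (Cons w ws)
  show ?case
    unfolding chn.simps Cons
    by (auto simp: nth_Cons split: nat.splits)
qed

lemma chain_side:
  assumes "chn E v ws" "set ws \<subseteq> A \<union> B" "\<forall>a\<in>A. \<forall>b\<in>B. \<not> E a b \<and> \<not> E b a"
  shows "set ws \<subseteq> A \<or> set ws \<subseteq> B"
  using assms
proof (induction ws arbitrary: v)
  case Nil then show ?case by simp
next
  case (Cons w ws)
  then have IH: "set ws \<subseteq> A \<or> set ws \<subseteq> B" by auto
  show ?case
  proof (cases ws)
    case Nil then show ?thesis using Cons.prems by auto
  next
    case (Cons u us)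
    then have "E w u" using Cons.prems by auto
    then show ?thesis using IH Cons.prems \<open>ws = u # us\<close> by auto
  qed
qed

lemma cnt_disconn:
  assumes "U = A \<union> B" "A \<noteq> {}" "B \<noteq> {}" "A \<inter> B = {}"
    "\<forall>a\<in>A. \<forall>b\<in>B. \<not> E a b \<and> \<not> E b a"
  shows "cnt E v U = 0"
proof -
  have "paths E v U = {}"
  proof (rule ccontr)
    assume "paths E v U \<noteq> {}"
    then obtain ws where "distinct ws" "set ws = U" "chn E v ws" unfolding paths_def by auto
    then have "set ws \<subseteq> A \<or> set ws \<subseteq> B" using chain_side[of E v ws A B] assms by auto
    then show False using assms \<open>set ws = U\<close> by auto
  qed
  then show ?thesis unfolding cnt_def by simp
qed

lemma cnt_isolated:
  assumes "x \<in> U" "\<forall>z\<in>insert v U. \<not> E z x"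
  shows "cnt E v U = 0"
proof -
  have "paths E v U = {}"
  proof (rule ccontr)
    assume "paths E v U \<noteq> {}"
    then obtain ws where w: "distinct ws" "set ws = U" "chn E v ws" unfolding paths_def by auto
    then obtain i where i: "i < length ws" "ws ! i = x" using assms(1) by (metis in_set_conv_nth)
    then have "E ((v#ws)!i) x" using w(3) chn_nth by metis
    moreover have "(v#ws)!i \<in> insert v U" using i w(2)
      by (cases i) auto
    ultimately show False using assms(2) by auto
  qed
  then show ?thesis unfolding cnt_def by simp
qed

definition one_nb :: "('a \<Rightarrow> 'a \<Rightarrow> bool) \<Rightarrow> 'a set \<Rightarrow> 'a \<Rightarrow> bool" where
  "one_nb E S z = (\<forall>p q. p \<in> S \<longrightarrow> q \<in> S \<longrightarrow> E z p \<longrightarrow> E z q \<longrightarrow> p = q)"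

lemma interior:
  assumes w: "distinct ws" "set ws = U" "chn E v ws" and "v \<notin> U"
    and sym: "\<And>a b. E a b \<Longrightarrow> E b a" and i: "i + 1 < length ws"
  shows "\<not> one_nb E (insert v U) (ws ! i)"
proof -
  have d: "distinct (v # ws)" using w assms(4) by auto
  have e1: "E ((v#ws)!i) (ws!i)" using w(3) i chn_nth by (metis add_lessD1)
  have e2: "E ((v#ws)!(Suc i)) (ws!(Suc i))" using w(3) i chn_nth by (metis Suc_eq_plus1)
  have p: "(v#ws)!i \<in> insert v U" using i w(2) by (cases i) auto
  have q: "ws!(Suc i) \<in> insert v U" using i w(2) by auto
  have ne: "(v#ws)!i \<noteq> ws!(Suc i)"
  proof -
    have "ws ! Suc i = (v#ws) ! (Suc (Suc i))" by simp
    moreover have "Suc (Suc i) < length (v#ws)" using i by simp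
    moreover have "(v#ws)!i = (v#ws)!i" ..
    ultimately show ?thesis using nth_eq_iff_index_eq[OF d, of i "Suc (Suc i)"] i by simp
  qed
  show ?thesis unfolding one_nb_def using e1 e2 p q ne sym by (metis nth_Cons_Suc)
qed

lemma cnt_deadends:
  assumes "v \<notin> U" "\<And>a b. E a b \<Longrightarrow> E b a" "x \<in> U" "y \<in> U" "x \<noteq> y"
    "one_nb E (insert v U) x" "one_nb E (insert v U) y"
  shows "cnt E v U = 0"
proof -
  have "paths E v U = {}"
  proof (rule ccontr)
    assume "paths E v U \<noteq> {}"
    then obtain ws where w: "distinct ws" "set ws = U" "chn E v ws" unfolding paths_def by auto
    obtain i where i: "i < length ws" "ws ! i = x" using assms(3) w(2) by (metis in_set_conv_nth)
    obtain j where j: "j < length ws" "ws ! j = y" using assms(4) w(2) by (metis in_set_conv_nth)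
    have "i \<noteq> j" using i j assms(5) by auto
    then have "i + 1 < length ws \<or> j + 1 < length ws" using i j by auto
    then show False using interior[OF w assms(1,2)] i j assms(6,7) by metis
  qed
  then show ?thesis unfolding cnt_def by simp
qed

lemma chn_map:
  assumes "set ws \<subseteq> S" "v \<in> S" "\<forall>a\<in>S. \<forall>b\<in>S. E a b = E' (f a) (f b)"
  shows "chn E' (f v) (map f ws) = chn E v ws"
  using assms by (induction ws arbitrary: v) auto

lemma cnt_iso:
  assumes inj: "inj_on f (insert v U)"
    and adj: "\<forall>a\<in>insert v U. \<forall>b\<in>insert v U. E a b = E' (f a) (f b)"
  shows "cnt E v U = cnt E' (f v) (f ` U)"
proof -
  have "bij_betw (map f) (paths E v U) (paths E' (f v) (f ` U))"
  proof (rule bij_betw_imageI)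
    show "inj_on (map f) (paths E v U)"
    proof (rule inj_onI)
      fix xs ys assume "xs \<in> paths E v U" "ys \<in> paths E v U" "map f xs = map f ys"
      then have "set xs \<union> set ys \<subseteq> insert v U" unfolding paths_def by auto
      then have "inj_on f (set xs \<union> set ys)" using inj inj_on_subset by blast
      then show "xs = ys" using inj_on_map_eq_map[of f xs ys] \<open>map f xs = map f ys\<close> by simp
    qed
  next
    show "map f ` paths E v U = paths E' (f v) (f ` U)"
    proof
      show "map f ` paths E v U \<subseteq> paths E' (f v) (f ` U)"
      proof
        fix xs assume "xs \<in> map f ` paths E v U"
        then obtain ws where ws: "ws \<in> paths E v U" "xs = map f ws" by auto
        then have w: "distinct ws" "set ws = U" "chn E v ws" unfolding paths_def by auto
        have "inj_on f U" using inj by (rule inj_on_subset) auto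
        then have "distinct xs" using ws(2) w by (simp add: distinct_map)
        moreover have "set xs = f ` U" using ws w by simp
        moreover have "chn E' (f v) (map f ws) = chn E v ws" using w by (intro chn_map[of ws "insert v U" v E E' f] adj) auto
        then have "chn E' (f v) xs" using w(3) ws(2) by simp
        ultimately show "xs \<in> paths E' (f v) (f ` U)" unfolding paths_def by simp
      qed
    next
      show "paths E' (f v) (f ` U) \<subseteq> map f ` paths E v U"
      proof
        fix xs assume "xs \<in> paths E' (f v) (f ` U)"
        then have x: "distinct xs" "set xs = f ` U" "chn E' (f v) xs" unfolding paths_def by auto
        define g where "g = the_inv_into (insert v U) f"
        define ws where "ws = map g xs"
        have fg: "map f ws = xs" unfolding ws_def g_def map_map
          by (rule map_idI) (use x(2) inj in \<open>auto intro: f_the_inv_into_f\<close>)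
        have "g ` f ` U = U"
        proof -
          have "g ` f ` U = (\<lambda>u. g (f u)) ` U" by (simp add: image_image)
          also have "\<dots> = (\<lambda>u. u) ` U" unfolding g_def
            by (rule image_cong) (use inj in \<open>auto intro: the_inv_into_f_f\<close>)
          finally show ?thesis by simp
        qed
        then have sw: "set ws = U" unfolding ws_def using x(2) by simp
        have "distinct ws" using fg x(1) by (metis distinct_map)
        moreover have "chn E' (f v) (map f ws) = chn E v ws" using sw by (intro chn_map[of ws "insert v U" v E E' f] adj) auto
        then have "chn E v ws" using fg x(3) by simp
        ultimately show "xs \<in> map f ` paths E v U" using fg sw unfolding paths_def by auto
      qed
    qed
  qed
  then show ?thesis unfolding cnt_def by (rule bij_betw_same_card)
qed




fun ladj :: "nat \<Rightarrow> bool \<Rightarrow> nat \<times> bool \<Rightarrow> nat \<times> bool \<Rightarrow> bool" where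
  "ladj h t (c,r) (c',r') = (c < h \<and> c' < h \<and> ((c = c' \<and> r' = (\<not>r)) \<or> (r' = r \<and> (c' = Suc c \<or> c = Suc c'))
      \<or> (c = h-1 \<and> c' = 0 \<and> r' = (r \<noteq> t)) \<or> (c = 0 \<and> c' = h-1 \<and> r' = (r \<noteq> t))))"

definition nb :: "nat \<Rightarrow> bool \<Rightarrow> nat \<times> bool \<Rightarrow> (nat \<times> bool) set" where
  "nb h t v = (case v of (c,r) \<Rightarrow> {(c, \<not>r)} \<union> (if Suc c < h then {(Suc c, r)} else {(0, r \<noteq> t)})
      \<union> (if 0 < c then {(c-1, r)} else {(h-1, r \<noteq> t)}))"

definition LV :: "nat \<Rightarrow> (nat \<times> bool) set" where "LV h = {0..<h} \<times> UNIV"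

definition refl :: "nat \<Rightarrow> bool \<Rightarrow> nat \<times> bool \<Rightarrow> nat \<times> bool" where
  "refl h t v = (case v of (c,r) \<Rightarrow> if c = 0 then (0,r) else (h - c, r \<noteq> t))"

locale lad = fixes h :: nat and t :: bool assumes h3: "3 \<le> h"
begin

lemma sym: "ladj h t a b \<Longrightarrow> ladj h t b a"
  by (cases a; cases b) auto

lemma adj_nb: "c < h \<Longrightarrow> c' < h \<Longrightarrow> ladj h t (c,r) (c',r') \<longleftrightarrow> (c',r') \<in> nb h t (c,r)"
  using h3 unfolding nb_def by (cases "c = 0"; cases "Suc c < h") auto

lemma step:
  assumes "c < h" "U \<subseteq> LV h" "U \<noteq> {}"
  shows "cnt (ladj h t) (c,r) U = (\<Sum>w\<in>nb h t (c,r) \<inter> U. cnt (ladj h t) w (U - {w}))"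
proof -
  have f: "finite U" using assms(2) unfolding LV_def by (rule finite_subset) auto
  have "{w\<in>U. ladj h t (c,r) w} = nb h t (c,r) \<inter> U"
  proof (rule set_eqI)
    fix w :: "nat \<times> bool"
    obtain c' r' where w: "w = (c',r')" by (cases w)
    show "w \<in> {w\<in>U. ladj h t (c,r) w} \<longleftrightarrow> w \<in> nb h t (c,r) \<inter> U"
    proof (cases "w \<in> U")
      case True
      then have "c' < h" using assms(2) w unfolding LV_def by auto
      then show ?thesis using adj_nb[OF assms(1), of c' r r'] w True by auto
    qed auto
  qed
  then show ?thesis using cnt_rec[OF f assms(3), of "ladj h t" "(c,r)"] by simp
qed

abbreviation C where "C \<equiv> cnt (ladj h t)"

lemma step1:
  assumes "c < h" "U \<subseteq> LV h" "nb h t (c,r) \<inter> U = {w}"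
  shows "C (c,r) U = C w (U - {w})"
proof -
  have "U \<noteq> {}" using assms(3) by auto
  then show ?thesis using step[OF assms(1,2)] assms(3) by simp
qed

lemma step2:
  assumes "c < h" "U \<subseteq> LV h" "nb h t (c,r) \<inter> U = {w1, w2}" "w1 \<noteq> w2"
  shows "C (c,r) U = C w1 (U - {w1}) + C w2 (U - {w2})"
proof -
  have "U \<noteq> {}" using assms(3) by auto
  then show ?thesis using step[OF assms(1,2)] assms(3,4) by simp
qed

lemma step0:
  assumes "c < h" "U \<subseteq> LV h" "nb h t (c,r) \<inter> U = {}" "U \<noteq> {}"
  shows "C (c,r) U = 0"
  using step[OF assms(1,2,4)] assms(3) by simp

lemma down1: "1 \<le> c \<Longrightarrow> c \<le> j \<Longrightarrow> j < h \<Longrightarrow> C (j,r) ({c..<j} \<times> {r}) = 1"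
proof (induction j)
  case 0 then show ?case by simp
next
  case (Suc i)
  show ?case
  proof (cases "c = Suc i")
    case True then show ?thesis by (simp add: cnt_empty)
  next
    case False
    then have ci: "c \<le> i" using Suc by simp
    have "nb h t (Suc i, r) \<inter> ({c..<Suc i} \<times> {r}) = {(i, r)}"
      using Suc.prems ci unfolding nb_def by auto
    then have "C (Suc i, r) ({c..<Suc i} \<times> {r}) = C (i,r) ({c..<Suc i} \<times> {r} - {(i,r)})"
      by (rule step1[rotated 2]) (use Suc.prems in \<open>auto simp: LV_def\<close>)
    also have "{c..<Suc i} \<times> {r} - {(i,r)} = {c..<i} \<times> {r}" by auto
    also have "C (i,r) ({c..<i} \<times> {r}) = 1" using Suc ci by simp
    finally show ?thesis .
  qed
qed

lemma up1: "j < d \<Longrightarrow> d \<le> h \<Longrightarrow> \<not> (j = 0 \<and> d = h \<and> \<not> t) \<Longrightarrow> C (j,r) ({Suc j..<d} \<times> {r}) = 1"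
proof (induction "d - j" arbitrary: j)
  case 0 then show ?case by simp
next
  case (Suc k)
  show ?case
  proof (cases "Suc j = d")
    case True then show ?thesis by (simp add: cnt_empty)
  next
    case False
    have "nb h t (j, r) \<inter> ({Suc j..<d} \<times> {r}) = {(Suc j, r)}"
      using Suc.prems False h3 unfolding nb_def by auto
    then have "C (j, r) ({Suc j..<d} \<times> {r}) = C (Suc j,r) ({Suc j..<d} \<times> {r} - {(Suc j,r)})"
      by (rule step1[rotated 2]) (use Suc.prems in \<open>auto simp: LV_def\<close>)
    also have "{Suc j..<d} \<times> {r} - {(Suc j,r)} = {Suc (Suc j)..<d} \<times> {r}" by auto
    also have "C (Suc j,r) ({Suc (Suc j)..<d} \<times> {r}) = 1" using Suc False by simp
    finally show ?thesis .
  qed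
qed

lemma down2:
  assumes "1 \<le> a" "a < h"
  shows "j < a \<Longrightarrow> C (j,True) ({0..<j} \<times> {True} \<union> {Suc a..<h} \<times> UNIV) = C (0,True) ({Suc a..<h} \<times> UNIV)"
proof (induction j)
  case 0 then show ?case by simp
next
  case (Suc i)
  have "nb h t (Suc i, True) \<inter> ({0..<Suc i} \<times> {True} \<union> {Suc a..<h} \<times> UNIV) = {(i, True)}"
    using Suc.prems assms unfolding nb_def by auto
  then have "C (Suc i, True) ({0..<Suc i} \<times> {True} \<union> {Suc a..<h} \<times> UNIV)
      = C (i,True) ({0..<Suc i} \<times> {True} \<union> {Suc a..<h} \<times> UNIV - {(i,True)})"
    by (rule step1[rotated 2]) (use Suc.prems assms in \<open>auto simp: LV_def\<close>)
  also have "{0..<Suc i} \<times> {True} \<union> {Suc a..<h} \<times> UNIV - {(i,True)} = {0..<i} \<times> {True} \<union> {Suc a..<h} \<times> UNIV"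
    using Suc.prems by auto
  finally show ?case using Suc by simp
qed

lemma upath: "1 \<le> c \<Longrightarrow> c < j \<Longrightarrow> j < d \<Longrightarrow> d \<le> h \<Longrightarrow>
   C (j,r) ({Suc j..<d} \<times> {r} \<union> {c..<d} \<times> {\<not>r}) = 1"
proof (induction "d - j" arbitrary: j)
  case 0 then show ?case by simp
next
  case (Suc k)
  show ?case
  proof (cases "Suc j = d")
    case True
    have "nb h t (j, r) \<inter> ({Suc j..<d} \<times> {r} \<union> {c..<d} \<times> {\<not>r}) = {(j, \<not>r)}"
      using Suc.prems True h3 unfolding nb_def by auto
    then have "C (j, r) ({Suc j..<d} \<times> {r} \<union> {c..<d} \<times> {\<not>r})
        = C (j,\<not>r) ({Suc j..<d} \<times> {r} \<union> {c..<d} \<times> {\<not>r} - {(j,\<not>r)})"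
      by (rule step1[rotated 2]) (use Suc.prems in \<open>auto simp: LV_def\<close>)
    also have "{Suc j..<d} \<times> {r} \<union> {c..<d} \<times> {\<not>r} - {(j,\<not>r)} = {c..<j} \<times> {\<not>r}"
      using True by auto
    also have "C (j,\<not>r) ({c..<j} \<times> {\<not>r}) = 1" using Suc.prems True by (intro down1) auto
    finally show ?thesis .
  next
    case False
    let ?U = "{Suc j..<d} \<times> {r} \<union> {c..<d} \<times> {\<not>r}"
    have "nb h t (j, r) \<inter> ?U = {(j, \<not>r), (Suc j, r)}"
      using Suc.prems False h3 unfolding nb_def by auto
    then have "C (j, r) ?U = C (j,\<not>r) (?U - {(j,\<not>r)}) + C (Suc j, r) (?U - {(Suc j, r)})"
      by (rule step2[rotated 2]) (use Suc.prems in \<open>auto simp: LV_def\<close>)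
    moreover have "C (j,\<not>r) (?U - {(j,\<not>r)}) = 0"
    proof (rule cnt_disconn)
      show "?U - {(j,\<not>r)} = {c..<j} \<times> {\<not>r} \<union> {Suc j..<d} \<times> UNIV" using Suc.prems by auto
      show "{c..<j} \<times> {\<not>r} \<noteq> {}" using Suc.prems by auto
      show "{Suc j..<d} \<times> (UNIV::bool set) \<noteq> {}" using Suc.prems False by auto
      show "{c..<j} \<times> {\<not>r} \<inter> {Suc j..<d} \<times> UNIV = {}" by auto
      show "\<forall>a\<in>{c..<j} \<times> {\<not>r}. \<forall>b\<in>{Suc j..<d} \<times> UNIV. \<not> ladj h t a b \<and> \<not> ladj h t b a"
        using Suc.prems by auto
    qed
    moreover have "?U - {(Suc j, r)} = {Suc (Suc j)..<d} \<times> {r} \<union> {c..<d} \<times> {\<not>r}" by auto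
    moreover have "C (Suc j, r) ({Suc (Suc j)..<d} \<times> {r} \<union> {c..<d} \<times> {\<not>r}) = 1"
      using Suc False by simp
    ultimately show ?thesis by simp
  qed
qed

lemma lg: "1 \<le> c \<Longrightarrow> c < d \<Longrightarrow> d \<le> h \<Longrightarrow> C (c,r) ({c..<d} \<times> UNIV - {(c,r)}) = d - c"
proof (induction "d - c" arbitrary: c r)
  case 0 then show ?case by simp
next
  case (Suc k)
  let ?U = "{c..<d} \<times> UNIV - {(c,r)}"
  show ?case
  proof (cases "Suc c = d")
    case True
    have "nb h t (c, r) \<inter> ?U = {(c, \<not>r)}"
      using Suc.prems True h3 unfolding nb_def by auto
    then have "C (c, r) ?U = C (c,\<not>r) (?U - {(c,\<not>r)})"
      by (rule step1[rotated 2]) (use Suc.prems in \<open>auto simp: LV_def\<close>)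
    also have "?U - {(c,\<not>r)} = {}" using True by auto
    finally show ?thesis using True by (simp add: cnt_empty)
  next
    case False
    have "nb h t (c, r) \<inter> ?U = {(c, \<not>r), (Suc c, r)}"
      using Suc.prems False h3 unfolding nb_def by auto
    then have "C (c, r) ?U = C (c,\<not>r) (?U - {(c,\<not>r)}) + C (Suc c, r) (?U - {(Suc c, r)})"
      by (rule step2[rotated 2]) (use Suc.prems in \<open>auto simp: LV_def\<close>)
    moreover have "C (c,\<not>r) (?U - {(c,\<not>r)}) = d - Suc c"
    proof -
      have e: "?U - {(c,\<not>r)} = {Suc c..<d} \<times> UNIV" by auto
      have "nb h t (c, \<not>r) \<inter> {Suc c..<d} \<times> UNIV = {(Suc c, \<not>r)}"
        using Suc.prems False h3 unfolding nb_def by auto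
      then have "C (c,\<not>r) ({Suc c..<d} \<times> UNIV) = C (Suc c, \<not>r) ({Suc c..<d} \<times> UNIV - {(Suc c,\<not>r)})"
        by (rule step1[rotated 2]) (use Suc.prems in \<open>auto simp: LV_def\<close>)
      also have "\<dots> = d - Suc c" using Suc False by simp
      finally show ?thesis using e by simp
    qed
    moreover have "C (Suc c, r) (?U - {(Suc c, r)}) = 1"
    proof -
      have "?U - {(Suc c, r)} = {Suc (Suc c)..<d} \<times> {r} \<union> {c..<d} \<times> {\<not>r}" by auto
      then show ?thesis using Suc.prems False upath[of c "Suc c" d r] by simp
    qed
    ultimately show ?thesis using Suc.prems False by simp
  qed
qed
lemma one_nb_nb:
  assumes "c < h" "S \<subseteq> LV h" "nb h t (c,r) \<inter> S \<subseteq> {w}"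
  shows "one_nb (ladj h t) S (c,r)"
  unfolding one_nb_def
proof (intro allI impI)
  fix p q assume pq: "p \<in> S" "q \<in> S" "ladj h t (c,r) p" "ladj h t (c,r) q"
  obtain c1 r1 where p: "p = (c1,r1)" by (cases p)
  obtain c2 r2 where q: "q = (c2,r2)" by (cases q)
  have "c1 < h" "c2 < h" using pq p q assms(2) unfolding LV_def by auto
  then have "p \<in> nb h t (c,r)" "q \<in> nb h t (c,r)" using adj_nb[OF assms(1)] pq p q by auto
  then show "p = q" using assms(3) pq by auto
qed

lemma isolated_nb:
  assumes "c < h" "insert v U \<subseteq> LV h" "(c,r) \<in> U" "nb h t (c,r) \<inter> insert v U = {}"
  shows "C v U = 0"
proof (rule cnt_isolated[OF assms(3)])
  show "\<forall>z\<in>insert v U. \<not> ladj h t z (c, r)"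
  proof
    fix z assume z: "z \<in> insert v U"
    obtain c1 r1 where p: "z = (c1,r1)" by (cases z)
    have "c1 < h" using z p assms(2) unfolding LV_def by auto
    then show "\<not> ladj h t z (c, r)" using adj_nb[OF assms(1)] assms(4) z p sym by blast
  qed
qed

lemma zz: "1 \<le> a \<Longrightarrow> Suc a \<le> j \<Longrightarrow> j < h \<Longrightarrow>
  C (j,\<rho>) (({j..<h} \<times> UNIV - {(j,\<rho>)}) \<union> {0..<a} \<times> {True}) = (if (\<rho> \<noteq> odd (h - 1 - j)) = t then 1 else 0)"
proof (induction "h - j" arbitrary: j \<rho>)
  case 0 then show ?case by simp
next
  case (Suc k)
  let ?T = "{0..<a} \<times> {True}"
  let ?U = "({j..<h} \<times> UNIV - {(j,\<rho>)}) \<union> ?T"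
  show ?case
  proof (cases "Suc j = h")
    case True
    show ?thesis
    proof (cases "\<rho> = t")
      case rt: True
      have "nb h t (j, \<rho>) \<inter> ?U = {(j, \<not>\<rho>)}"
        using Suc.prems True rt h3 unfolding nb_def by auto
      then have "C (j, \<rho>) ?U = C (j,\<not>\<rho>) (?U - {(j,\<not>\<rho>)})"
        by (rule step1[rotated 2]) (use Suc.prems in \<open>auto simp: LV_def\<close>)
      also have "?U - {(j,\<not>\<rho>)} = ?T" using True Suc.prems by auto
      also have "nb h t (j, \<not>\<rho>) \<inter> ?T = {(0, True)}"
        using Suc.prems True rt h3 unfolding nb_def by auto
      then have "C (j,\<not>\<rho>) ?T = C (0,True) (?T - {(0,True)})"
        by (rule step1[rotated 2]) (use Suc.prems in \<open>auto simp: LV_def\<close>)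
      also have "?T - {(0,True)} = {Suc 0..<a} \<times> {True}" by auto
      also have "C (0,True) ({Suc 0..<a} \<times> {True}) = 1" using Suc.prems by (intro up1) auto
      finally show ?thesis using True rt by simp
    next
      case rt: False
      have "nb h t (j, \<rho>) \<inter> ?U = {(j, \<not>\<rho>), (0,True)}"
        using Suc.prems True rt h3 unfolding nb_def by auto
      then have "C (j, \<rho>) ?U = C (j,\<not>\<rho>) (?U - {(j,\<not>\<rho>)}) + C (0,True) (?U - {(0,True)})"
        by (rule step2[rotated 2]) (use Suc.prems in \<open>auto simp: LV_def\<close>)
      moreover have "C (j,\<not>\<rho>) (?U - {(j,\<not>\<rho>)}) = 0"
      proof -
        have "?U - {(j,\<not>\<rho>)} = ?T" using True Suc.prems by auto
        moreover have "C (j,\<not>\<rho>) ?T = 0"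
          by (rule step0) (use Suc.prems True rt h3 in \<open>auto simp: LV_def nb_def\<close>)
        ultimately show ?thesis by simp
      qed
      moreover have "C (0,True) (?U - {(0,True)}) = 0"
        by (rule isolated_nb[where c = j and r = "\<not>\<rho>"]) (use Suc.prems True rt h3 in \<open>auto simp: LV_def nb_def\<close>)
      ultimately show ?thesis using True rt by simp
    qed
  next
    case False
    have "nb h t (j, \<rho>) \<inter> ?U = {(j, \<not>\<rho>), (Suc j, \<rho>)}"
      using Suc.prems False h3 unfolding nb_def by auto
    then have "C (j, \<rho>) ?U = C (j,\<not>\<rho>) (?U - {(j,\<not>\<rho>)}) + C (Suc j,\<rho>) (?U - {(Suc j,\<rho>)})"
      by (rule step2[rotated 2]) (use Suc.prems in \<open>auto simp: LV_def\<close>)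
    moreover have "C (j,\<not>\<rho>) (?U - {(j,\<not>\<rho>)}) = (if (\<rho> \<noteq> odd (h - 1 - j)) = t then 1 else 0)"
    proof -
      have e: "?U - {(j,\<not>\<rho>)} = {Suc j..<h} \<times> UNIV \<union> ?T" using Suc.prems by auto
      have "nb h t (j, \<not>\<rho>) \<inter> ({Suc j..<h} \<times> UNIV \<union> ?T) = {(Suc j, \<not>\<rho>)}"
        using Suc.prems False h3 unfolding nb_def by auto
      then have "C (j,\<not>\<rho>) ({Suc j..<h} \<times> UNIV \<union> ?T) = C (Suc j,\<not>\<rho>) ({Suc j..<h} \<times> UNIV \<union> ?T - {(Suc j,\<not>\<rho>)})"
        by (rule step1[rotated 2]) (use Suc.prems in \<open>auto simp: LV_def\<close>)
      also have "{Suc j..<h} \<times> UNIV \<union> ?T - {(Suc j,\<not>\<rho>)} = ({Suc j..<h} \<times> UNIV - {(Suc j,\<not>\<rho>)}) \<union> ?T"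
        using Suc.prems by auto
      also have "C (Suc j,\<not>\<rho>) (({Suc j..<h} \<times> UNIV - {(Suc j,\<not>\<rho>)}) \<union> ?T)
          = (if ((\<not>\<rho>) \<noteq> odd (h - 1 - Suc j)) = t then 1 else 0)"
      proof -
        have k: "k = h - Suc j" using Suc.hyps(2) by arith
        have "Suc a \<le> Suc j" "Suc j < h" using Suc.prems False by auto
        then show ?thesis using Suc.hyps(1)[OF k] Suc.prems(1) by blast
      qed
      also have "(if ((\<not>\<rho>) \<noteq> odd (h - 1 - Suc j)) = t then 1 else 0) = (if (\<rho> \<noteq> odd (h - 1 - j)) = t then 1 else (0::nat))"
      proof -
        have eq: "h - 1 - j = Suc (h - 1 - Suc j)" using Suc.prems False by simp
        have p: "odd (h - 1 - j) = (\<not> odd (h - 1 - Suc j))" by (simp only: eq even_Suc)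
        have gen: "\<And>X. (if ((\<not>\<rho>) \<noteq> X) = t then 1 else 0) = (if (\<rho> \<noteq> (\<not>X)) = t then 1 else (0::nat))"
          by auto
        show ?thesis by (simp only: p gen)
      qed
      finally show ?thesis using e by simp
    qed
    moreover have "C (Suc j,\<rho>) (?U - {(Suc j,\<rho>)}) = 0"
    proof (rule cnt_deadends[where x = "(j,\<not>\<rho>)" and y = "(a-1,True)"])
      let ?S = "insert (Suc j, \<rho>) (?U - {(Suc j, \<rho>)})"
      show "(Suc j, \<rho>) \<notin> ?U - {(Suc j, \<rho>)}" by simp
      show "\<And>x y. ladj h t x y \<Longrightarrow> ladj h t y x" by (rule sym)
      show "(j, \<not>\<rho>) \<in> ?U - {(Suc j, \<rho>)}" using Suc.prems by auto
      show "(a - 1, True) \<in> ?U - {(Suc j, \<rho>)}" using Suc.prems by auto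
      show "(j, \<not>\<rho>) \<noteq> (a - 1, True)" using Suc.prems by auto
      have S: "?S \<subseteq> LV h" using Suc.prems False by (auto simp: LV_def)
      show "one_nb (ladj h t) ?S (j, \<not>\<rho>)"
        by (rule one_nb_nb[OF _ S, of _ _ "(Suc j, \<not>\<rho>)"]) (use Suc.prems False h3 in \<open>auto simp: nb_def\<close>)
      show "one_nb (ladj h t) ?S (a - 1, True)"
      proof (cases "a = 1")
        case True
        show ?thesis
          by (rule one_nb_nb[OF _ S, of _ _ "(h-1, \<not>t)"]) (use Suc.prems True h3 in \<open>auto simp: nb_def\<close>)
      next
        case False
        show ?thesis
          by (rule one_nb_nb[OF _ S, of _ _ "(a-2, True)"]) (use Suc.prems False h3 in \<open>auto simp: nb_def\<close>)
      qed
    qed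
    ultimately show ?thesis by simp
  qed
qed
lemma refl_adj: "a \<in> LV h \<Longrightarrow> b \<in> LV h \<Longrightarrow> ladj h t (refl h t a) (refl h t b) = ladj h t a b"
  using h3 by (cases a; cases b) (auto simp: refl_def LV_def)

lemma refl_inj: "inj_on (refl h t) (LV h)"
proof (rule inj_onI)
  fix a b assume "a \<in> LV h" "b \<in> LV h" "refl h t a = refl h t b"
  then show "a = b" by (cases a; cases b) (auto simp: refl_def LV_def split: if_splits)
qed

lemma C_refl: "v \<in> LV h \<Longrightarrow> U \<subseteq> LV h \<Longrightarrow> C v U = C (refl h t v) (refl h t ` U)"
proof (rule cnt_iso)
  assume "v \<in> LV h" "U \<subseteq> LV h"
  then have s: "insert v U \<subseteq> LV h" by auto
  then show "inj_on (refl h t) (insert v U)" using refl_inj inj_on_subset by blast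
  show "\<forall>a\<in>insert v U. \<forall>b\<in>insert v U. ladj h t a b = ladj h t (refl h t a) (refl h t b)"
    using s refl_adj by blast
qed

lemma refl_diff: "A \<subseteq> LV h \<Longrightarrow> B \<subseteq> LV h \<Longrightarrow> refl h t ` (A - B) = refl h t ` A - refl h t ` B"
  by (rule inj_on_image_set_diff[OF refl_inj]) auto

lemma refl_blk: "a < h \<Longrightarrow> refl h t ` ({Suc a..<h} \<times> UNIV) = {1..<h-a} \<times> UNIV"
proof
  assume a: "a < h"
  show "refl h t ` ({Suc a..<h} \<times> UNIV) \<subseteq> {1..<h-a} \<times> UNIV"
    using a by (auto simp: refl_def)
  show "{1..<h-a} \<times> UNIV \<subseteq> refl h t ` ({Suc a..<h} \<times> UNIV)"
  proof
    fix w assume w: "w \<in> {1..<h-a} \<times> (UNIV :: bool set)"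
    obtain c r where cr: "w = (c,r)" by (cases w)
    have "refl h t (h - c, r \<noteq> t) = (c, r)" using w cr by (auto simp: refl_def)
    moreover have "(h - c, r \<noteq> t) \<in> {Suc a..<h} \<times> UNIV" using w cr by auto
    ultimately show "w \<in> refl h t ` ({Suc a..<h} \<times> UNIV)" using cr by (metis image_eqI)
  qed
qed

lemma refl_LV: "refl h t ` LV h = LV h"
proof
  show "refl h t ` LV h \<subseteq> LV h" using h3 by (auto simp: refl_def LV_def split: if_splits)
  show "LV h \<subseteq> refl h t ` LV h"
  proof
    fix w assume w: "w \<in> LV h"
    obtain c r where cr: "w = (c,r)" by (cases w)
    show "w \<in> refl h t ` LV h"
    proof (cases "c = 0")
      case True
      then have "refl h t (0, r) = w" using cr by (simp add: refl_def)
      moreover have "(0, r) \<in> LV h" using h3 by (simp add: LV_def)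
      ultimately show ?thesis by (metis image_eqI)
    next
      case False
      have "refl h t (h - c, r \<noteq> t) = (c, r)" using w cr False by (auto simp: refl_def LV_def)
      moreover have "(h - c, r \<noteq> t) \<in> LV h" using w cr False by (auto simp: LV_def)
      ultimately show ?thesis using cr by (metis image_eqI)
    qed
  qed
qed

lemma qq:
  assumes tt: "t = even h" and a: "1 \<le> a" "a < h"
  shows "C (a,True) ({0..<a} \<times> {True} \<union> {Suc a..<h} \<times> UNIV) = max (h-1-a) 1 + (if even a then 1 else 0)"
proof -
  let ?B = "{Suc a..<h} \<times> (UNIV :: bool set)"
  let ?U = "{0..<a} \<times> {True} \<union> ?B"
  have back0: "C (a-1,True) (?U - {(a-1,True)}) = C (0,True) ?B"
  proof -
    have "?U - {(a-1,True)} = {0..<a-1} \<times> {True} \<union> ?B" using a by auto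
    then show ?thesis using down2[OF a, of "a-1"] a by simp
  qed
  show ?thesis
  proof (cases "Suc a < h")
    case True
    have "nb h t (a, True) \<inter> ?U = {(a-1, True), (Suc a, True)}"
      using a True h3 unfolding nb_def by auto
    then have "C (a, True) ?U = C (a-1,True) (?U - {(a-1,True)}) + C (Suc a,True) (?U - {(Suc a,True)})"
      by (rule step2[rotated 2]) (use a in \<open>auto simp: LV_def\<close>)
    moreover have "C (0,True) ?B = h - 1 - a"
    proof -
      have "nb h t (0, True) \<inter> ?B = {(h-1, \<not>t)}"
        using a True h3 unfolding nb_def by auto
      then have "C (0, True) ?B = C (h-1,\<not>t) (?B - {(h-1,\<not>t)})"
        by (rule step1[rotated 2]) (use a in \<open>auto simp: LV_def\<close>)
      also have "\<dots> = C (refl h t (h-1,\<not>t)) (refl h t ` (?B - {(h-1,\<not>t)}))"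
        by (rule C_refl) (use h3 in \<open>auto simp: LV_def\<close>)
      also have "refl h t (h-1,\<not>t) = (1, True)" using h3 by (auto simp: refl_def)
      also have "refl h t ` (?B - {(h-1,\<not>t)}) = {1..<h-a} \<times> UNIV - {(1,True)}"
      proof -
        have "refl h t ` (?B - {(h-1,\<not>t)}) = refl h t ` ?B - refl h t ` {(h-1,\<not>t)}"
          by (rule refl_diff) (use h3 in \<open>auto simp: LV_def\<close>)
        also have "refl h t ` ?B = {1..<h-a} \<times> UNIV" by (rule refl_blk[OF a(2)])
        also have "refl h t ` {(h-1,\<not>t)} = {(1,True)}" using h3 by (auto simp: refl_def)
        finally show ?thesis .
      qed
      also have "C (1, True) ({1..<h-a} \<times> UNIV - {(1,True)}) = h - a - 1"
        using lg[of 1 "h-a" True] a True by simp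
      finally show ?thesis by simp
    qed
    moreover have "C (Suc a,True) (?U - {(Suc a,True)}) = (if even a then 1 else 0)"
    proof -
      have "?U - {(Suc a,True)} = ({Suc a..<h} \<times> UNIV - {(Suc a,True)}) \<union> {0..<a} \<times> {True}" by auto
      moreover have "C (Suc a,True) (({Suc a..<h} \<times> UNIV - {(Suc a,True)}) \<union> {0..<a} \<times> {True})
          = (if (True \<noteq> odd (h - 1 - Suc a)) = t then 1 else 0)"
        by (rule zz) (use a True in auto)
      moreover have "((True \<noteq> odd (h - 1 - Suc a)) = t) = even a"
      proof -
        define m where "m = h - a - 2"
        have m: "h = a + 2 + m" using True unfolding m_def by simp
        have hm: "h - 1 - Suc a = m" using m by simp
        have e: "even h = (even a = even m)" using m by simp
        show ?thesis unfolding hm tt e by auto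
      qed
      ultimately show ?thesis by simp
    qed
    ultimately show ?thesis using back0 True by simp
  next
    case False
    then have ha: "Suc a = h" using a by simp
    then have B0: "?B = {}" by simp
    have bk: "C (a-1,True) (?U - {(a-1,True)}) = 1" using back0 B0 by (simp add: cnt_empty)
    show ?thesis
    proof (cases t)
      case True
      have "nb h t (a, True) \<inter> ?U = {(a-1, True)}"
        using a ha True h3 unfolding nb_def by auto
      then have "C (a, True) ?U = C (a-1,True) (?U - {(a-1,True)})"
        by (rule step1[rotated 2]) (use a in \<open>auto simp: LV_def\<close>)
      moreover have "odd a" using tt True ha by auto
      ultimately show ?thesis using bk ha by simp
    next
      case False
      have "nb h t (a, True) \<inter> ?U = {(a-1, True), (0, True)}"
        using a ha False h3 unfolding nb_def by auto
      moreover have "(a-1, True) \<noteq> (0, True)" using a ha h3 by auto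
      ultimately have "C (a, True) ?U = C (a-1,True) (?U - {(a-1,True)}) + C (0,True) (?U - {(0,True)})"
        by (rule step2[rotated 2]) (use a in \<open>auto simp: LV_def\<close>)
      moreover have "?U - {(0,True)} = {Suc 0..<a} \<times> {True}" using ha by auto
      moreover have "C (0,True) ({Suc 0..<a} \<times> {True}) = 1" using a ha by (intro up1) auto
      moreover have "even a" using tt False ha by auto
      ultimately show ?thesis using bk ha by simp
    qed
  qed
qed

definition Qv :: "nat \<Rightarrow> nat" where "Qv b = max (h-1-b) 1 + (if even b then 1 else 0)"

lemma rr:
  assumes tt: "t = even h"
  shows "1 \<le> a \<Longrightarrow> a < h \<Longrightarrow> C (a,False) ({Suc a..<h} \<times> {False} \<union> {0..<h} \<times> {True})
     = (\<Sum>b\<in>{a..<h}. Qv b) + (if t then 1 else 0)"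
proof (induction "h - a" arbitrary: a)
  case 0 then show ?case by simp
next
  case (Suc k)
  let ?U = "{Suc a..<h} \<times> {False} \<union> {0..<h} \<times> {True}"
  have rung: "C (a,True) (?U - {(a,True)}) = Qv a"
  proof -
    have "?U - {(a,True)} = {0..<a} \<times> {True} \<union> {Suc a..<h} \<times> UNIV" using Suc.prems by auto
    then show ?thesis using qq[OF tt Suc.prems] unfolding Qv_def by simp
  qed
  show ?case
  proof (cases "Suc a < h")
    case True
    have "nb h t (a, False) \<inter> ?U = {(a, True), (Suc a, False)}"
      using Suc.prems True h3 unfolding nb_def by auto
    then have "C (a, False) ?U = C (a,True) (?U - {(a,True)}) + C (Suc a,False) (?U - {(Suc a,False)})"
      by (rule step2[rotated 2]) (use Suc.prems in \<open>auto simp: LV_def\<close>)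
    moreover have "?U - {(Suc a,False)} = {Suc (Suc a)..<h} \<times> {False} \<union> {0..<h} \<times> {True}" by auto
    moreover have "C (Suc a,False) ({Suc (Suc a)..<h} \<times> {False} \<union> {0..<h} \<times> {True})
       = (\<Sum>b\<in>{Suc a..<h}. Qv b) + (if t then 1 else 0)"
    proof -
      have k: "k = h - Suc a" using Suc.hyps(2) by arith
      show ?thesis using Suc.hyps(1)[OF k] True by simp
    qed
    moreover have "(\<Sum>b\<in>{a..<h}. Qv b) = Qv a + (\<Sum>b\<in>{Suc a..<h}. Qv b)"
      using Suc.prems by (simp add: sum.atLeast_Suc_lessThan)
    ultimately show ?thesis using rung by simp
  next
    case False
    then have ha: "Suc a = h" using Suc.prems by simp
    have sum1: "(\<Sum>b\<in>{a..<h}. Qv b) = Qv a" using ha by auto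
    show ?thesis
    proof (cases t)
      case True
      have "nb h t (a, False) \<inter> ?U = {(a, True), (0, True)}"
        using Suc.prems ha True h3 unfolding nb_def by auto
      moreover have "(a, True) \<noteq> (0, True)" using Suc.prems by auto
      ultimately have "C (a, False) ?U = C (a,True) (?U - {(a,True)}) + C (0,True) (?U - {(0,True)})"
        by (rule step2[rotated 2]) (use Suc.prems in \<open>auto simp: LV_def\<close>)
      moreover have "?U - {(0,True)} = {Suc 0..<h} \<times> {True}" using ha by auto
      moreover have "C (0,True) ({Suc 0..<h} \<times> {True}) = 1" using True h3 by (intro up1) auto
      ultimately show ?thesis using rung sum1 True by simp
    next
      case False
      have "nb h t (a, False) \<inter> ?U = {(a, True)}"
        using Suc.prems ha False h3 unfolding nb_def by auto
      then have "C (a, False) ?U = C (a,True) (?U - {(a,True)})"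
        by (rule step1[rotated 2]) (use Suc.prems in \<open>auto simp: LV_def\<close>)
      then show ?thesis using rung sum1 False by simp
    qed
  qed
qed

lemma main_lad:
  assumes tt: "t = even h"
  shows "C (0,False) (LV h - {(0,False)}) = 2 * ((\<Sum>b\<in>{1..<h}. Qv b) + (if t then 1 else 0)) + 2 * (h - 1)"
proof -
  let ?U = "LV h - {(0,False)}"
  let ?R = "(\<Sum>b\<in>{1..<h}. Qv b) + (if t then 1 else 0)"
  have "nb h t (0, False) \<inter> ?U = {(0, True), (1, False), (h-1, t)}"
    using h3 unfolding nb_def LV_def by auto
  moreover have "(0,True) \<noteq> (1,False)" "(0,True) \<noteq> (h-1,t)" "(1,False) \<noteq> (h-1,t)" using h3 by auto
  ultimately have "C (0, False) ?U = C (0,True) (?U - {(0,True)}) + (C (1,False) (?U - {(1,False)}) + C (h-1,t) (?U - {(h-1,t)}))"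
    using step[of 0 ?U False] h3 by (auto simp: LV_def)
  moreover have r1: "C (1,False) (?U - {(1,False)}) = ?R"
  proof -
    have "?U - {(1,False)} = {Suc 1..<h} \<times> {False} \<union> {0..<h} \<times> {True}" by (auto simp: LV_def)
    then show ?thesis using rr[OF tt, of 1] h3 by simp
  qed
  moreover have "C (h-1,t) (?U - {(h-1,t)}) = ?R"
  proof -
    have "C (h-1,t) (?U - {(h-1,t)}) = C (refl h t (h-1,t)) (refl h t ` (?U - {(h-1,t)}))"
      by (rule C_refl) (use h3 in \<open>auto simp: LV_def\<close>)
    also have "refl h t (h-1,t) = (1,False)" using h3 by (auto simp: refl_def)
    also have "refl h t ` (?U - {(h-1,t)}) = ?U - {(1,False)}"
    proof -
      have "?U - {(h-1,t)} = LV h - {(0,False),(h-1,t)}" by auto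
      then have "refl h t ` (?U - {(h-1,t)}) = refl h t ` LV h - refl h t ` {(0,False),(h-1,t)}"
        using refl_diff[of "LV h" "{(0,False),(h-1,t)}"] h3 by (auto simp: LV_def)
      also have "refl h t ` {(0,False),(h-1,t)} = {(0,False),(1,False)}" using h3 by (auto simp: refl_def)
      finally show ?thesis using refl_LV by auto
    qed
    finally show ?thesis using r1 by simp
  qed
  moreover have "C (0,True) (?U - {(0,True)}) = 2 * (h - 1)"
  proof -
    let ?B = "{1..<h} \<times> (UNIV :: bool set)"
    have e: "?U - {(0,True)} = ?B" by (auto simp: LV_def)
    have "nb h t (0, True) \<inter> ?B = {(1, True), (h-1, \<not>t)}"
      using h3 unfolding nb_def by auto
    moreover have "(1, True) \<noteq> (h-1, \<not>t)" using h3 by auto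
    ultimately have "C (0, True) ?B = C (1,True) (?B - {(1,True)}) + C (h-1,\<not>t) (?B - {(h-1,\<not>t)})"
      by (rule step2[rotated 2]) (use h3 in \<open>auto simp: LV_def\<close>)
    moreover have l1: "C (1,True) (?B - {(1,True)}) = h - 1" using lg[of 1 h True] h3 by simp
    moreover have "C (h-1,\<not>t) (?B - {(h-1,\<not>t)}) = h - 1"
    proof -
      have "C (h-1,\<not>t) (?B - {(h-1,\<not>t)}) = C (refl h t (h-1,\<not>t)) (refl h t ` (?B - {(h-1,\<not>t)}))"
        by (rule C_refl) (use h3 in \<open>auto simp: LV_def\<close>)
      also have "refl h t (h-1,\<not>t) = (1,True)" using h3 by (auto simp: refl_def)
      also have "refl h t ` (?B - {(h-1,\<not>t)}) = ?B - {(1,True)}"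
      proof -
        have "refl h t ` (?B - {(h-1,\<not>t)}) = refl h t ` ?B - refl h t ` {(h-1,\<not>t)}"
          by (rule refl_diff) (use h3 in \<open>auto simp: LV_def\<close>)
        also have "refl h t ` ?B = {1..<h-0} \<times> UNIV" using refl_blk[of 0] h3 by simp
        also have "refl h t ` {(h-1,\<not>t)} = {(1,True)}" using h3 by (auto simp: refl_def)
        finally show ?thesis by simp
      qed
      finally show ?thesis using l1 by simp
    qed
    ultimately show ?thesis using e by simp
  qed
  ultimately show ?thesis by simp
qed
end



lemma oddh: "1 \<le> h \<Longrightarrow> odd (h - 1) = even (h::nat)"
  by (cases h) auto

lemma k00:
  fixes h cx cy :: nat and q :: bool
  assumes "3 \<le> h" "cx < h" "cy < h" "cx \<noteq> cy"
  shows "ladj h (even h) (cx, q \<noteq> odd cx) (cy, q \<noteq> odd cy) = ((cx = h-1 \<and> cy = 0) \<or> (cx = 0 \<and> cy = h-1))"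
  using assms oddh[of h] by auto

lemma k10:
  fixes h cx cy :: nat and q :: bool
  assumes "3 \<le> h" "cx < h" "cy < h"
  shows "ladj h (even h) (cx, q \<noteq> odd cx) (cy, (\<not>q) \<noteq> odd cy) = (cx = cy \<or> cy = Suc cx \<or> cx = Suc cy)"
  using assms oddh[of h] by auto

lemma a00: "a < h \<Longrightarrow> b < (h::nat) \<Longrightarrow> a \<noteq> b \<Longrightarrow>
  (h - 1 \<le> (if b \<le> a then a - b else a + 2*h - b) \<and> (if b \<le> a then a - b else a + 2*h - b) \<le> h + 1)
   = ((a = h-1 \<and> b = 0) \<or> (a = 0 \<and> b = h-1))"
  by (cases "b \<le> a") auto
lemma a01: "a < h \<Longrightarrow> b < (h::nat) \<Longrightarrow>
  (h - 1 \<le> (if h + b \<le> a then a - (h+b) else a + 2*h - (h+b)) \<and> (if h+b \<le> a then a - (h+b) else a + 2*h - (h+b)) \<le> h + 1)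
   = (a = b \<or> b = Suc a \<or> a = Suc b)"
  by auto
lemma a10: "a < h \<Longrightarrow> b < (h::nat) \<Longrightarrow>
  (h - 1 \<le> (if b \<le> h + a then h + a - b else h + a + 2*h - b) \<and> (if b \<le> h+a then h+a - b else h+a + 2*h - b) \<le> h + 1)
   = (a = b \<or> b = Suc a \<or> a = Suc b)"
  by auto
lemma a11: "a < h \<Longrightarrow> b < (h::nat) \<Longrightarrow> a \<noteq> b \<Longrightarrow>
  (h - 1 \<le> (if h+b \<le> h+a then h+a - (h+b) else h+a + 2*h - (h+b)) \<and> (if h+b \<le> h+a then h+a - (h+b) else h+a + 2*h - (h+b)) \<le> h + 1)
   = ((a = h-1 \<and> b = 0) \<or> (a = 0 \<and> b = h-1))"
  by (cases "b \<le> a") auto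

lemma ladj_irrefl: "3 \<le> h \<Longrightarrow> \<not> ladj h t v v"
  by (cases v) auto

definition DD :: "nat \<Rightarrow> nat \<Rightarrow> nat \<Rightarrow> nat" where
  "DD n X Y = (if Y \<le> X then X - Y else X + n - Y)"

lemma int_mod_D:
  assumes "X < n" "Y < n"
  shows "(int X - int Y) mod int n = int (DD n X Y)"
proof (cases "Y \<le> X")
  case True
  then show ?thesis using assms unfolding DD_def by (simp add: of_nat_diff)
next
  case False
  have "(int X - int Y) mod int n = (int X - int Y + int n) mod int n" by simp
  also have "\<dots> = int X - int Y + int n" using assms False by (intro mod_pos_pos_trivial) auto
  finally show ?thesis using assms False unfolding DD_def by (simp add: of_nat_diff)
qed

lemma cdist_D:
  assumes "x \<in> {1..n}" "y \<in> {1..n}" "x \<noteq> y"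
  shows "cdist n x y = min (DD n (x-1) (y-1)) (n - DD n (x-1) (y-1))"
proof -
  have l: "x - 1 < n" "y - 1 < n" using assms by auto
  have i: "int (x-1) - int (y-1) = int x - int y" "int (y-1) - int (x-1) = int y - int x"
    using assms by auto
  have a: "(int x - int y) mod int n = int (DD n (x-1) (y-1))"
    using int_mod_D[OF l] i by simp
  have b: "(int y - int x) mod int n = int (DD n (y-1) (x-1))"
    using int_mod_D[OF l(2,1)] i(2) by simp
  have c: "DD n (y-1) (x-1) = n - DD n (x-1) (y-1)" using assms unfolding DD_def by auto
  show ?thesis unfolding cdist_def a b c by (simp add: min_def)
qed

lemma cdist_same: "cdist n x x = 0"
  unfolding cdist_def by simp

definition zadj :: "nat \<Rightarrow> nat \<Rightarrow> nat \<Rightarrow> bool" where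
  "zadj n x y = (x \<noteq> y \<and> n div 2 - 1 \<le> cdist n x y)"

definition phi :: "nat \<Rightarrow> nat \<Rightarrow> nat \<times> bool" where
  "phi h x = ((x-1) mod h, ((x-1) div h = 1) \<noteq> odd ((x-1) mod h))"

lemma zadj_iso:
  assumes n: "n = 2*h" and h: "3 \<le> h" and x: "x \<in> {1..n}" and y: "y \<in> {1..n}"
  shows "zadj n x y = ladj h (even h) (phi h x) (phi h y)"
proof (cases "x = y")
  case True
  then show ?thesis unfolding zadj_def using ladj_irrefl[OF h] by simp
next
  case False
  define X where "X = x - 1"
  define Y where "Y = y - 1"
  have XY: "X < 2*h" "Y < 2*h" "X \<noteq> Y" using x y n False unfolding X_def Y_def by auto
  have z: "zadj n x y = (h - 1 \<le> DD n X Y \<and> DD n X Y \<le> h + 1)"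
  proof -
    have "zadj n x y = (h - 1 \<le> min (DD n X Y) (n - DD n X Y))"
      unfolding zadj_def using cdist_D[OF x y False] False n unfolding X_def Y_def by simp
    moreover have "DD n X Y < n" "0 < DD n X Y" using XY n unfolding DD_def by auto
    ultimately show ?thesis using n by auto
  qed
  have hp: "0 < h" using h by simp
  have qx: "X div h < 2" using XY hp by (simp add: div_less_iff_less_mult)
  have qy: "Y div h < 2" using XY hp by (simp add: div_less_iff_less_mult)
  define a where "a = X mod h"
  define b where "b = Y mod h"
  have ex: "X = X div h * h + a" unfolding a_def by simp
  have ey: "Y = Y div h * h + b" unfolding b_def by simp
  have cx: "a < h" and cy: "b < h" using hp unfolding a_def b_def by auto
  have px: "phi h x = (a, (X div h = 1) \<noteq> odd a)" unfolding phi_def X_def a_def ..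
  have py: "phi h y = (b, (Y div h = 1) \<noteq> odd b)" unfolding phi_def Y_def b_def ..
  have DDe: "DD n X Y = (if Y \<le> X then X - Y else X + 2*h - Y)" unfolding DD_def n ..
  consider "X div h = 0" "Y div h = 0" | "X div h = 0" "Y div h = 1" | "X div h = 1" "Y div h = 0"
    | "X div h = 1" "Y div h = 1" using qx qy by linarith
  then show ?thesis
  proof cases
    case 1
    then have e: "X = a" "Y = b" using ex ey by auto
    then have ne: "a \<noteq> b" using XY by auto
    have "ladj h (even h) (phi h x) (phi h y) = ((a = h-1 \<and> b = 0) \<or> (a = 0 \<and> b = h-1))"
      unfolding px py 1 using k00[OF h cx cy ne, of False] by simp
    moreover have "(h - 1 \<le> DD n X Y \<and> DD n X Y \<le> h + 1) = ((a = h-1 \<and> b = 0) \<or> (a = 0 \<and> b = h-1))"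
      unfolding DDe unfolding e by (rule a00[OF cx cy ne])
    ultimately show ?thesis using z by simp
  next
    case 2
    then have e: "X = a" "Y = h + b" using ex ey by auto
    have "ladj h (even h) (phi h x) (phi h y) = (a = b \<or> b = Suc a \<or> a = Suc b)"
      unfolding px py 2 using k10[OF h cx cy, of False] by simp
    moreover have "(h - 1 \<le> DD n X Y \<and> DD n X Y \<le> h + 1) = (a = b \<or> b = Suc a \<or> a = Suc b)"
      unfolding DDe unfolding e by (rule a01[OF cx cy])
    ultimately show ?thesis using z by simp
  next
    case 3
    then have e: "X = h + a" "Y = b" using ex ey by auto
    have "ladj h (even h) (phi h x) (phi h y) = (a = b \<or> b = Suc a \<or> a = Suc b)"
      unfolding px py 3 using k10[OF h cx cy, of True] by simp
    moreover have "(h - 1 \<le> DD n X Y \<and> DD n X Y \<le> h + 1) = (a = b \<or> b = Suc a \<or> a = Suc b)"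
      unfolding DDe unfolding e by (rule a10[OF cx cy])
    ultimately show ?thesis using z by simp
  next
    case 4
    then have e: "X = h + a" "Y = h + b" using ex ey by auto
    then have ne: "a \<noteq> b" using XY by auto
    have "ladj h (even h) (phi h x) (phi h y) = ((a = h-1 \<and> b = 0) \<or> (a = 0 \<and> b = h-1))"
      unfolding px py 4 using k00[OF h cx cy ne, of True] by simp
    moreover have "(h - 1 \<le> DD n X Y \<and> DD n X Y \<le> h + 1) = ((a = h-1 \<and> b = 0) \<or> (a = 0 \<and> b = h-1))"
      unfolding DDe unfolding e by (rule a11[OF cx cy ne])
    ultimately show ?thesis using z by simp
  qed
qed




lemma cdist_le:
  assumes "n = 2*h" "x \<in> {1..n}" "y \<in> {1..n}"
  shows "cdist n x y \<le> h"
proof (cases "x = y")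
  case True then show ?thesis by (simp add: cdist_same)
next
  case False
  have "DD n (x-1) (y-1) < n" using assms False unfolding DD_def by auto
  then show ?thesis using cdist_D[OF assms(2,3) False] assms(1) by (simp add: min_def split: if_splits; arith)
qed

lemma cdist_hh:
  assumes n: "n = 2*h" "1 \<le> h" and x: "x \<in> {1..n}" and y: "y \<in> {1..n}" and z: "z \<in> {1..n}"
    and c1: "cdist n x y = h" and c2: "cdist n y z = h"
  shows "x = z"
proof -
  have xy: "x \<noteq> y" using c1 n by (auto simp: cdist_same)
  have yz: "y \<noteq> z" using c2 n by (auto simp: cdist_same)
  have d1: "DD n (x-1) (y-1) = h"
  proof -
    have "DD n (x-1) (y-1) < n" using x y xy unfolding DD_def by auto
    then show ?thesis using c1 cdist_D[OF x y xy] n by linarith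
  qed
  have d2: "DD n (y-1) (z-1) = h"
  proof -
    have "DD n (y-1) (z-1) < n" using y z yz unfolding DD_def by auto
    then show ?thesis using c2 cdist_D[OF y z yz] n by linarith
  qed
  show ?thesis using d1 d2 x y z n unfolding DD_def by (auto split: if_splits)
qed

definition MM :: "nat \<Rightarrow> nat list \<Rightarrow> nat set" where
  "MM n s = {cdist n (s ! j) (s ! (j+1)) | j. j + 1 < length s}"

lemma MM_finite: "finite (MM n s)"
proof -
  have "MM n s = (\<lambda>j. cdist n (s ! j) (s ! (j+1))) ` {j. j + 1 < length s}" unfolding MM_def by auto
  moreover have "finite {j. j + 1 < length s}" by (rule finite_subset[of _ "{..<length s}"]) auto
  ultimately show ?thesis by simp
qed

lemma S_eq:
  assumes n: "n = 2*h" and h: "3 \<le> h"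
  shows "{s. latin_row n s \<and> s ! 0 = 1 \<and> inner_distance n s = n div 2 - 1}
       = Cons 1 ` paths (zadj n) 1 ({1..n} - {1})"
proof
  show "{s. latin_row n s \<and> s ! 0 = 1 \<and> inner_distance n s = n div 2 - 1} \<subseteq> Cons 1 ` paths (zadj n) 1 ({1..n} - {1})"
  proof
    fix s assume "s \<in> {s. latin_row n s \<and> s ! 0 = 1 \<and> inner_distance n s = n div 2 - 1}"
    then have s: "length s = n" "distinct s" "set s = {1..n}" "s ! 0 = 1" "Min (MM n s) = n div 2 - 1"
      unfolding latin_row_def inner_distance_def MM_def by auto
    obtain w l where sl: "s = w # l" using s(1) n h by (cases s) auto
    then have w: "w = 1" using s(4) by simp
    have dl: "distinct l" "1 \<notin> set l" using s(2) sl w by auto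
    have setl: "set l = {1..n} - {1}" using s(3) sl w dl(2) by auto
    have "chn (zadj n) 1 l"
      unfolding chn_nth
    proof (intro allI impI)
      fix i assume i: "i < length l"
      have e1: "(1#l) ! i = s ! i" using sl w by simp
      have e2: "l ! i = s ! Suc i" using sl by simp
      have ne: "s ! i \<noteq> s ! Suc i" using s(2) i sl nth_eq_iff_index_eq[OF s(2), of i "Suc i"] by auto
      have "cdist n (s ! i) (s ! Suc i) \<in> MM n s" unfolding MM_def using i sl by auto
      then have "Min (MM n s) \<le> cdist n (s ! i) (s ! Suc i)" using MM_finite by (rule Min_le[rotated])
      then show "zadj n ((1#l) ! i) (l ! i)" unfolding zadj_def e1 e2 using ne s(5) by simp
    qed
    then have "l \<in> paths (zadj n) 1 ({1..n} - {1})" unfolding paths_def using dl setl by simp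
    then show "s \<in> Cons 1 ` paths (zadj n) 1 ({1..n} - {1})" using sl w by simp
  qed
next
  show "Cons 1 ` paths (zadj n) 1 ({1..n} - {1}) \<subseteq> {s. latin_row n s \<and> s ! 0 = 1 \<and> inner_distance n s = n div 2 - 1}"
  proof
    fix s assume "s \<in> Cons 1 ` paths (zadj n) 1 ({1..n} - {1})"
    then obtain l where sl: "s = 1 # l" and l: "distinct l" "set l = {1..n} - {1}" "chn (zadj n) 1 l"
      unfolding paths_def by auto
    have "card ({1..n} - {1}) = n - 1" using n h by (subst card_Diff_singleton) auto
    then have len: "length l = n - 1" using l distinct_card[of l] by simp
    have lens: "length s = n" using len sl n h by simp
    have ds: "distinct s" using sl l by auto
    have "set s = insert 1 ({1..n} - {1})" using sl l(2) by simp
    also have "\<dots> = {1..n}" using n h by auto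
    finally have ss: "set s = {1..n}" .
    have nd: "n div 2 = h" using n by simp
    have adj: "\<And>j. j + 1 < length s \<Longrightarrow> zadj n (s ! j) (s ! (j+1))"
    proof -
      fix j assume "j + 1 < length s"
      then have "j < length l" using sl by simp
      then have "zadj n ((1#l) ! j) (l ! j)" using l(3) chn_nth by metis
      then show "zadj n (s ! j) (s ! (j+1))" using sl by simp
    qed
    have inr: "\<And>j. j < length s \<Longrightarrow> s ! j \<in> {1..n}" using ss nth_mem by blast
    have lb: "h - 1 \<le> e" if e: "e \<in> MM n s" for e
    proof -
      obtain j where j: "e = cdist n (s!j) (s!(j+1))" "j+1 < length s" using e unfolding MM_def by auto
      then have "zadj n (s ! j) (s ! (j+1))" using adj by simp
      then show ?thesis using nd j(1) unfolding zadj_def by simp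
    qed
    have "h - 1 \<in> MM n s"
    proof (rule ccontr)
      assume nin: "h - 1 \<notin> MM n s"
      have m0: "cdist n (s ! 0) (s ! 1) \<in> MM n s" unfolding MM_def
        by (rule CollectI, rule exI[of _ 0]) (use lens n h in simp)
      have m1: "cdist n (s ! 1) (s ! 2) \<in> MM n s" unfolding MM_def
        by (rule CollectI, rule exI[of _ 1]) (use lens n h in \<open>simp add: numeral_2_eq_2\<close>)
      have b0: "cdist n (s ! 0) (s ! 1) \<le> h" by (rule cdist_le[OF n inr inr]) (use lens n h in auto)
      have b1: "cdist n (s ! 1) (s ! 2) \<le> h" by (rule cdist_le[OF n inr inr]) (use lens n h in auto)
      have "cdist n (s ! 0) (s ! 1) \<noteq> h - 1" using m0 nin by auto
      then have "cdist n (s ! 0) (s ! 1) = h" using b0 lb[OF m0] by linarith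
      moreover have "cdist n (s ! 1) (s ! 2) \<noteq> h - 1" using m1 nin by auto
      then have "cdist n (s ! 1) (s ! 2) = h" using b1 lb[OF m1] by linarith
      moreover have i0: "s ! 0 \<in> {1..n}" "s ! 1 \<in> {1..n}" "s ! 2 \<in> {1..n}" using inr lens n h by auto
      moreover have "(1::nat) \<le> h" using h by simp
      ultimately have "s ! 0 = s ! 2" using cdist_hh[OF n] by blast
      moreover have "(0::nat) \<noteq> 2" by simp
      ultimately show False using nth_eq_iff_index_eq[OF ds, of 0 2] lens n h by auto
    qed
    then have "Min (MM n s) = h - 1" using MM_finite lb by (intro Min_eqI) auto
    then show "s \<in> {s. latin_row n s \<and> s ! 0 = 1 \<and> inner_distance n s = n div 2 - 1}"
    proof -
      have "inner_distance n s = Min (MM n s)" unfolding inner_distance_def MM_def ..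
      moreover have "latin_row n s" unfolding latin_row_def using lens ds ss by simp
      ultimately show ?thesis using \<open>Min (MM n s) = h - 1\<close> nd sl by simp
    qed
  qed
qed




lemma phi_inj:
  assumes "n = 2*h" "3 \<le> h"
  shows "inj_on (phi h) {1..n}"
proof (rule inj_onI)
  fix x y assume x: "x \<in> {1..n}" and y: "y \<in> {1..n}" and e: "phi h x = phi h y"
  have hp: "0 < h" using assms by simp
  have "x - 1 < 2*h" "y - 1 < 2*h" using x y assms by auto
  then have qx: "(x-1) div h < 2" and qy: "(y-1) div h < 2" using hp by (simp_all add: div_less_iff_less_mult)
  have m: "(x-1) mod h = (y-1) mod h" using e unfolding phi_def by simp
  have "snd (phi h x) = snd (phi h y)" using e by simp
  then have "(((x-1) div h = 1) \<noteq> odd ((x-1) mod h)) = (((y-1) div h = 1) \<noteq> odd ((y-1) mod h))"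
    unfolding phi_def by simp
  then have "((x-1) div h = 1) = ((y-1) div h = 1)" using m by auto
  then have d: "(x-1) div h = (y-1) div h" using qx qy by linarith
  have "x - 1 = y - 1" using m d by (metis div_mult_mod_eq)
  then show "x = y" using x y by (simp; arith)
qed

lemma phi_LV:
  assumes n: "n = 2*h" and h: "3 \<le> h"
  shows "phi h ` {1..n} = LV h"
proof
  show "phi h ` {1..n} \<subseteq> LV h" using h unfolding phi_def LV_def by auto
  show "LV h \<subseteq> phi h ` {1..n}"
  proof
    fix w assume w: "w \<in> LV h"
    obtain c r where cr: "w = (c,r)" by (cases w)
    have c: "c < h" using w cr unfolding LV_def by simp
    define q :: nat where "q = (if r \<noteq> odd c then 1 else 0)"
    define x where "x = q * h + c + 1"
    have xm: "(x - 1) mod h = c" "(x - 1) div h = q" unfolding x_def using c by (auto simp: q_def)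
    have "phi h x = (c, (q = 1) \<noteq> odd c)" unfolding phi_def xm ..
    also have "\<dots> = w" using cr unfolding q_def by auto
    finally have "phi h x = w" .
    moreover have "x \<in> {1..n}" unfolding x_def q_def using c n by auto
    ultimately show "w \<in> phi h ` {1..n}" by blast
  qed
qed

lemma P_cnt:
  assumes n: "n = 2*h" and h: "3 \<le> h"
  shows "P n = cnt (ladj h (even h)) (0,False) (LV h - {(0,False)})"
proof -
  have "P n = card (Cons 1 ` paths (zadj n) 1 ({1..n} - {1}))" unfolding P_def S_eq[OF n h] ..
  also have "\<dots> = cnt (zadj n) 1 ({1..n} - {1})" unfolding cnt_def by (rule card_image) (auto intro: inj_onI)
  also have "\<dots> = cnt (ladj h (even h)) (phi h 1) (phi h ` ({1..n} - {1}))"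
  proof (rule cnt_iso)
    have s: "insert 1 ({1..n} - {1}) = {1..n}" using n h by auto
    show "inj_on (phi h) (insert 1 ({1..n} - {1}))" unfolding s by (rule phi_inj[OF n h])
    show "\<forall>a\<in>insert 1 ({1..n} - {1}). \<forall>b\<in>insert 1 ({1..n} - {1}). zadj n a b = ladj h (even h) (phi h a) (phi h b)"
      unfolding s using zadj_iso[OF n h] by blast
  qed
  also have "phi h 1 = (0, False)" unfolding phi_def by simp
  also have "phi h ` ({1..n} - {1}) = LV h - {(0,False)}"
  proof -
    have "phi h ` ({1..n} - {1}) = phi h ` {1..n} - phi h ` {1}"
      by (rule inj_on_image_set_diff[OF phi_inj[OF n h]]) (use n h in auto)
    also have "phi h ` {1} = {(0,False)}" unfolding phi_def by simp
    finally show ?thesis using phi_LV[OF n h] by simp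
  qed
  finally show ?thesis .
qed

lemma sumA1: "2 \<le> h \<Longrightarrow> 2 * (\<Sum>k\<in>{1..<h}. max (k - 1) (1::nat)) = (h-1)*(h-2) + 2"
proof (induction h rule: nat_induct_at_least)
  case base then show ?case by simp
next
  case (Suc m)
  define S where "S = (\<Sum>k\<in>{1..<m}. max (k - 1) (1::nat))"
  have "(\<Sum>k\<in>{1..<Suc m}. max (k - 1) (1::nat)) = S + max (m - 1) 1"
    unfolding S_def using Suc.hyps by simp
  also have "max (m - 1) (1::nat) = m - 1" using Suc.hyps by simp
  finally have e: "(\<Sum>k\<in>{1..<Suc m}. max (k - 1) (1::nat)) = S + (m - 1)" .
  obtain j where j: "m = j + 2" using Suc.hyps by (metis add.commute le_Suc_ex)
  have IH: "2 * S = (j+1)*j + 2" using Suc.IH unfolding S_def j by simp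
  show ?case unfolding e using IH unfolding j by (simp add: algebra_simps)
qed

lemma sumA: "2 \<le> h \<Longrightarrow> 2 * (\<Sum>b\<in>{1..<h}. max (h - 1 - b) (1::nat)) = (h-1)*(h-2) + 2"
proof -
  assume h: "2 \<le> h"
  have "(\<Sum>k\<in>{1..<h}. max (k - 1) (1::nat)) = (\<Sum>i\<in>{1..<h}. max (h + 1 - Suc i - 1) 1)"
    by (rule sum.atLeastLessThan_rev)
  also have "\<dots> = (\<Sum>b\<in>{1..<h}. max (h - 1 - b) (1::nat))"
    by (rule sum.cong) auto
  finally show ?thesis using sumA1[OF h] by simp
qed

lemma sumB: "1 \<le> h \<Longrightarrow> (\<Sum>b\<in>{1..<h}. (if even b then 1 else 0::nat)) = (h - 1) div 2"
proof (induction h rule: nat_induct_at_least)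
  case base then show ?case by simp
next
  case (Suc m)
  have "(\<Sum>b\<in>{1..<Suc m}. (if even b then 1 else 0::nat)) = (m - 1) div 2 + (if even m then 1 else 0)"
    using Suc by simp
  also have "\<dots> = (Suc m - 1) div 2"
  proof (cases "even m")
    case True
    then obtain q where q: "m = 2*q" by blast
    then show ?thesis using Suc.hyps True by (cases q) auto
  next
    case False
    then obtain q where q: "m = 2*q+1" using oddE by blast
    then show ?thesis using False by simp
  qed
  finally show ?case .
qed

theorem final:
  fixes n :: nat
  assumes "n \<ge> 6" and "even n"
  shows "(n mod 4 = 0 \<longrightarrow> 4 * P n = n^2 + 8) \<and> (n mod 4 = 2 \<longrightarrow> 4 * P n = n^2 + 4)"
proof -
  obtain h where n: "n = 2*h" using assms(2) by blast
  have h: "3 \<le> h" using assms(1) n by simp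
  interpret lad h "even h" using h by unfold_locales
  have "P n = 2 * ((\<Sum>b\<in>{1..<h}. Qv b) + (if even h then 1 else 0)) + 2 * (h - 1)"
    using P_cnt[OF n h] main_lad[OF refl] by simp
  also have "(\<Sum>b\<in>{1..<h}. Qv b) = (\<Sum>b\<in>{1..<h}. max (h - 1 - b) 1) + (\<Sum>b\<in>{1..<h}. (if even b then 1 else 0::nat))"
    unfolding Qv_def by (simp add: sum.distrib)
  finally have PP: "P n = 2 * ((\<Sum>b\<in>{1..<h}. max (h - 1 - b) 1) + (h - 1) div 2 + (if even h then 1 else 0)) + 2 * (h - 1)"
    using sumB[of h] h by simp
  have SA: "2 * (\<Sum>b\<in>{1..<h}. max (h - 1 - b) (1::nat)) = (h-1)*(h-2) + 2" using sumA[of h] h by simp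
  have PP2: "P n = (h-1)*(h-2) + 2 + 2 * ((h - 1) div 2) + 2 * (if even h then 1 else 0) + 2 * (h - 1)"
    using PP SA by simp
  show ?thesis
  proof (cases "even h")
    case True
    define k where "k = h div 2 - 2"
    have k: "h = 2*k + 4" unfolding k_def using True h by presburger
    have "P n = (2*k+3)*(2*k+2) + 2 + 2 * (k+1) + 2 + 2 * (2*k+3)"
      using PP2 True unfolding k by simp
    then have "4 * P n = n^2 + 8" unfolding n k by (simp add: algebra_simps power2_eq_square)
    moreover have "n mod 4 = 0" unfolding n k by simp
    ultimately show ?thesis by simp
  next
    case False
    define k where "k = h div 2 - 1"
    have k: "h = 2*k + 3" unfolding k_def using False h by presburger
    have "P n = (2*k+2)*(2*k+1) + 2 + 2 * (k+1) + 2 * (2*k+2)"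
      using PP2 False unfolding k by simp
    then have "4 * P n = n^2 + 4" unfolding n k by (simp add: algebra_simps power2_eq_square)
    moreover have "n mod 4 = 2" unfolding n k by presburger
    ultimately show ?thesis by simp
  qed
qed


theorem mainTheorem6:
  fixes n :: nat
  assumes "n \<ge> 6" and "even n"
  shows "(n mod 4 = 0 \<longrightarrow> 4 * P n = n^2 + 8) \<and> (n mod 4 = 2 \<longrightarrow> 4 * P n = n^2 + 4)"
  using final[OF assms] .

end
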